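(* For all integers $n,k,d\ge1$ such that $k^{1/d}$ is an integer, the function $\textsc{Word}_{S_n,k}$ is computed by an $S_n^{k-1}$-invariant $\Sigma_{d+1}$ formula and by an $S_n^{k-1}$-invariant $\Pi_{d+1}$ formula, each of size $k\,n^{d(k^{1/d}-1)}$.
   Context: $\overline{S_n}$ is the set of $n\times n$ permutation matrices. $\textsc{Word}_{S_n,k}:\overline{S_n}^k\subseteq\{0,1\}^{kn^2}\to\{0,1\}$ maps $(M_1,\dots,M_k)$ to the $(1,1)$-entry of $M_1\cdots M_k$; the variables are $M_{i,a,b}$. $S_n^{k-1}$ acts on variables by $(g_1,\dots,g_{k-1})\cdot M_{i,a,b}=M_{i,g_{i-1}(a),g_i(b)}$ with $g_0=g_k=1$. An $\mathsf{AC}$ formula is a rooted tree with unordered children. Leaves are labeled $0,1,x_i,\neg x_i$, and gates are unbounded fan-in $\textsc{and}$/$\textsc{or}$. A $\Sigma_{d+1}$ (resp. $\Pi_{d+1}$) formula is an $\mathsf{AC}$ formula of depth at most $d+1$ whose output gate is $\textsc{or}$ (resp. $\textsc{and}$). Size is the number of literal leaves. A formula is $P$-invariant if relabeling literals by any $\pi\in P$ yields an isomorphic labeled tree. "Computes" means agreeing with the function on $\overline{S_n}^k$. *)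

theory Defs
  imports "HOL-Library.Multiset" "HOL-Combinatorics.Permutations"
begin

text \<open>AC formulas: rooted trees with unordered children (children form a multiset,
so isomorphism of labelled trees is plain equality).  Leaves are constants 0/1
or literals x_v / not x_v.\<close>
datatype 'v acf =
    CFalse
  | CTrue
  | PosLit 'v
  | NegLit 'v
  | AndG "'v acf multiset"
  | OrG "'v acf multiset"

primrec ac_eval :: "'v acf \<Rightarrow> ('v \<Rightarrow> bool) \<Rightarrow> bool" where
  "ac_eval CFalse x = False"
| "ac_eval CTrue x = True"
| "ac_eval (PosLit v) x = x v"
| "ac_eval (NegLit v) x = (\<not> x v)"
| "ac_eval (AndG M) x = (\<forall>b \<in># image_mset (\<lambda>c. ac_eval c x) M. b)"
| "ac_eval (OrG M) x = (\<exists>b \<in># image_mset (\<lambda>c. ac_eval c x) M. b)"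

primrec ac_depth :: "'v acf \<Rightarrow> nat" where
  "ac_depth CFalse = 0"
| "ac_depth CTrue = 0"
| "ac_depth (PosLit v) = 0"
| "ac_depth (NegLit v) = 0"
| "ac_depth (AndG M) = Suc (Max (insert 0 (set_mset (image_mset ac_depth M))))"
| "ac_depth (OrG M) = Suc (Max (insert 0 (set_mset (image_mset ac_depth M))))"

primrec ac_size :: "'v acf \<Rightarrow> nat" where
  "ac_size CFalse = 0"
| "ac_size CTrue = 0"
| "ac_size (PosLit v) = 1"
| "ac_size (NegLit v) = 1"
| "ac_size (AndG M) = sum_mset (image_mset ac_size M)"
| "ac_size (OrG M) = sum_mset (image_mset ac_size M)"

definition is_Sigma :: "nat \<Rightarrow> 'v acf \<Rightarrow> bool" where
  "is_Sigma d f \<longleftrightarrow> ac_depth f \<le> d \<and> (\<exists>M. f = OrG M)"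

definition is_Pi :: "nat \<Rightarrow> 'v acf \<Rightarrow> bool" where
  "is_Pi d f \<longleftrightarrow> ac_depth f \<le> d \<and> (\<exists>M. f = AndG M)"

text \<open>Variables M_{i,a,b} are encoded 0-based as triples (i,a,b) with i<k, a,b<n.
An assignment x lies in the domain iff each of the k matrices is a permutation matrix.\<close>
type_synonym var = "nat \<times> nat \<times> nat"

definition perm_mat_at :: "nat \<Rightarrow> (var \<Rightarrow> bool) \<Rightarrow> nat \<Rightarrow> bool" where
  "perm_mat_at n x i \<longleftrightarrow>
     (\<forall>a<n. \<exists>!b. b < n \<and> x (i,a,b)) \<and> (\<forall>b<n. \<exists>!a. a < n \<and> x (i,a,b))"

definition perm_tuple :: "nat \<Rightarrow> nat \<Rightarrow> (var \<Rightarrow> bool) \<Rightarrow> bool" where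
  "perm_tuple n k x \<longleftrightarrow> (\<forall>i<k. perm_mat_at n x i)"

primrec prod_entry :: "nat \<Rightarrow> (var \<Rightarrow> bool) \<Rightarrow> nat \<Rightarrow> nat \<Rightarrow> nat \<Rightarrow> nat" where
  "prod_entry n x 0 a b = (if a = b then 1 else 0)"
| "prod_entry n x (Suc j) a b = (\<Sum>c<n. prod_entry n x j a c * (if x (j,c,b) then 1 else 0))"

text \<open>Word_{S_n,k}: the (1,1)-entry (0-based (0,0)) of M_1 ... M_k.\<close>
definition word_fn :: "nat \<Rightarrow> nat \<Rightarrow> (var \<Rightarrow> bool) \<Rightarrow> nat" where
  "word_fn n k x = prod_entry n x k 0 0"

definition computes_word :: "nat \<Rightarrow> nat \<Rightarrow> var acf \<Rightarrow> bool" where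
  "computes_word n k f \<longleftrightarrow>
     set_acf f \<subseteq> {(i,a,b). i < k \<and> a < n \<and> b < n} \<and>
     (\<forall>x. perm_tuple n k x \<longrightarrow> (if ac_eval f x then 1 else 0) = word_fn n k x)"

text \<open>Action of (g_1,...,g_{k-1}) in S_n^{k-1}, with g_0 = g_k = id:
matrix i (0-based) gets its rows permuted by g_i and columns by g_{i+1}.\<close>
definition valid_action :: "nat \<Rightarrow> nat \<Rightarrow> (nat \<Rightarrow> nat \<Rightarrow> nat) \<Rightarrow> bool" where
  "valid_action n k g \<longleftrightarrow> g 0 = id \<and> g k = id \<and> (\<forall>i. 0 < i \<and> i < k \<longrightarrow> g i permutes {..<n})"

definition act_var :: "(nat \<Rightarrow> nat \<Rightarrow> nat) \<Rightarrow> var \<Rightarrow> var" where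
  "act_var g v = (case v of (i,a,b) \<Rightarrow> (i, g i a, g (Suc i) b))"

definition Sn_invariant :: "nat \<Rightarrow> nat \<Rightarrow> var acf \<Rightarrow> bool" where
  "Sn_invariant n k f \<longleftrightarrow> (\<forall>g. valid_action n k g \<longrightarrow> map_acf (act_var g) f = f)"

end

theory Submission
  imports Defs "HOL-Library.FuncSet"
begin



primrec neg :: "'v acf \<Rightarrow> 'v acf" where
  "neg CFalse = CTrue" | "neg CTrue = CFalse" | "neg (PosLit v) = NegLit v" | "neg (NegLit v) = PosLit v"
| "neg (AndG M) = OrG (image_mset neg M)" | "neg (OrG M) = AndG (image_mset neg M)"

lemma neg_eval: "ac_eval (neg f) x = (\<not> ac_eval f x)"
  by (induction f) auto

lemma neg_depth: "ac_depth (neg f) = ac_depth f"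
proof (induction f)
  case (AndG M)
  then have "ac_depth ` neg ` set_mset M = ac_depth ` set_mset M"
    by (simp add: image_image)
  then show ?case by (simp add: image_image)
next
  case (OrG M)
  then have "ac_depth ` neg ` set_mset M = ac_depth ` set_mset M"
    by (simp add: image_image)
  then show ?case by (simp add: image_image)
qed auto

lemma neg_size: "ac_size (neg f) = ac_size f"
proof (induction f)
  case (AndG M)
  then have "image_mset ac_size (image_mset neg M) = image_mset ac_size M"
    by (simp add: multiset.map_comp cong: image_mset_cong)
  then show ?case by simp
next
  case (OrG M)
  then have "image_mset ac_size (image_mset neg M) = image_mset ac_size M"
    by (simp add: multiset.map_comp cong: image_mset_cong)
  then show ?case by simp
qed auto

lemma neg_set: "set_acf (neg f) = set_acf f"
  by (induction f) auto

lemma neg_map: "map_acf h (neg f) = neg (map_acf h f)"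
  by (induction f) (auto simp: multiset.map_comp cong: image_mset_cong)



lemma in_msum: "finite A \<Longrightarrow> c \<in># (\<Sum>j\<in>A. X j) \<longleftrightarrow> (\<exists>j\<in>A. c \<in># X j)"
  by (induction A rule: finite_induct) auto

lemma image_msum: "image_mset f (\<Sum>j\<in>A. X j) = (\<Sum>j\<in>A. image_mset f (X j))"
  by (cases "finite A", induction A rule: finite_induct) auto

lemma size_msum: "sum_mset (image_mset f (\<Sum>j\<in>A. X j)) = (\<Sum>j\<in>A. sum_mset (image_mset f (X j)))"
  by (cases "finite A", induction A rule: finite_induct) auto

lemma depth_and: "(\<forall>c\<in>#M. ac_depth c \<le> e) \<Longrightarrow> ac_depth (AndG M) \<le> Suc e"
  by auto
lemma depth_or: "(\<forall>c\<in>#M. ac_depth c \<le> e) \<Longrightarrow> ac_depth (OrG M) \<le> Suc e"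
  by auto



definition sig :: "nat \<Rightarrow> (var \<Rightarrow> bool) \<Rightarrow> nat \<Rightarrow> nat \<Rightarrow> nat" where
  "sig n x i a = (THE b. b < n \<and> x (i,a,b))"

primrec fw :: "nat \<Rightarrow> (var \<Rightarrow> bool) \<Rightarrow> nat \<Rightarrow> nat \<Rightarrow> nat \<Rightarrow> nat" where
  "fw n x s 0 a = a"
| "fw n x s (Suc l) a = sig n x (s+l) (fw n x s l a)"

lemma sig_prop: assumes "perm_mat_at n x i" "a < n" shows "sig n x i a < n \<and> x (i,a,sig n x i a)"
proof -
  have "\<exists>!b. b < n \<and> x (i,a,b)" using assms unfolding perm_mat_at_def by blast
  from theI'[OF this] show ?thesis unfolding sig_def .
qed

lemma sig_eq: assumes "perm_mat_at n x i" "a < n" "b < n" shows "x (i,a,b) \<longleftrightarrow> sig n x i a = b"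
proof
  assume h: "x (i,a,b)"
  have "\<exists>!b. b < n \<and> x (i,a,b)" using assms unfolding perm_mat_at_def by blast
  then show "sig n x i a = b" unfolding sig_def using h assms by (intro the1_equality) auto
next
  assume "sig n x i a = b"
  then show "x (i,a,b)" using sig_prop[OF assms(1,2)] by blast
qed

lemma fw_lt: "perm_tuple n k x \<Longrightarrow> s + l \<le> k \<Longrightarrow> a < n \<Longrightarrow> fw n x s l a < n"
proof (induction l)
  case (Suc l)
  then have "perm_mat_at n x (s+l)" "fw n x s l a < n" by (auto simp: perm_tuple_def)
  then show ?case using sig_prop by simp
qed simp

lemma fw_add: "fw n x s (l1+l2) a = fw n x (s+l1) l2 (fw n x s l1 a)"
  by (induction l2) (auto simp: add.assoc)

lemma prod_entry_fw: "perm_tuple n k x \<Longrightarrow> l \<le> k \<Longrightarrow> a < n \<Longrightarrow> b < n \<Longrightarrow>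
   prod_entry n x l a b = (if fw n x 0 l a = b then 1 else 0)"
proof (induction l arbitrary: b)
  case 0
  then show ?case by simp
next
  case (Suc l)
  have lt: "fw n x 0 l a < n" using fw_lt[of n k x 0 l a] Suc.prems by simp
  have pm: "perm_mat_at n x l" using Suc.prems by (simp add: perm_tuple_def)
  have "prod_entry n x (Suc l) a b = (\<Sum>c<n. (if fw n x 0 l a = c then 1 else 0) * (if x (l,c,b) then 1 else 0))"
    unfolding prod_entry.simps
  proof (rule sum.cong)
    fix c assume "c \<in> {..<n}"
    then show "prod_entry n x l a c * (if x (l,c,b) then 1 else 0) = (if fw n x 0 l a = c then 1 else 0) * (if x (l,c,b) then 1 else 0)"
      using Suc.IH[of c] Suc.prems by simp
  qed simp
  also have "\<dots> = (\<Sum>c<n. if c = fw n x 0 l a then (if x (l,c,b) then 1 else 0) else 0)"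
    by (rule sum.cong) auto
  also have "\<dots> = (if x (l, fw n x 0 l a, b) then 1 else 0)"
    using lt by (subst sum.delta) auto
  also have "\<dots> = (if fw n x 0 (Suc l) a = b then 1 else 0)"
    using sig_eq[OF pm lt Suc.prems(4)] by simp
  finally show ?case .
qed




definition Pset :: "nat \<Rightarrow> nat \<Rightarrow> (nat \<Rightarrow> nat) set" where
  "Pset n m = PiE {1..<m} (\<lambda>_. {..<n})"
definition ep :: "nat \<Rightarrow> nat \<Rightarrow> nat \<Rightarrow> (nat \<Rightarrow> nat) \<Rightarrow> nat \<Rightarrow> nat" where
  "ep m a b p j = (if j = 0 then a else if j = m then b else p j)"

primrec SP :: "nat \<Rightarrow> nat \<Rightarrow> nat \<Rightarrow> nat \<Rightarrow> nat \<Rightarrow> nat \<Rightarrow> var acf multiset \<times> var acf multiset" where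
  "SP n m 0 s a b = ({#PosLit (s,a,b)#}, {#PosLit (s,a,b)#})"
| "SP n m (Suc e) s a b =
    (image_mset (\<lambda>p. AndG (\<Sum>j<m. snd (SP n m e (s + j*m^e) (ep m a b p j) (ep m a b p (Suc j))))) (mset_set (Pset n m)),
     image_mset (\<lambda>p. OrG ((\<Sum>j<m-1. image_mset neg (snd (SP n m e (s + j*m^e) (ep m a b p j) (ep m a b p (Suc j)))))
          + fst (SP n m e (s + (m-1)*m^e) (ep m a b p (m-1)) b))) (mset_set (Pset n m)))"

lemma finite_Pset: "finite (Pset n m)"
  unfolding Pset_def by (simp add: finite_PiE)

lemma card_Pset: "card (Pset n m) = n ^ (m - 1)"
  unfolding Pset_def by (simp add: card_PiE)

lemma ep_lt: "p \<in> Pset n m \<Longrightarrow> a < n \<Longrightarrow> b < n \<Longrightarrow> j \<le> m \<Longrightarrow> ep m a b p j < n"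
  unfolding ep_def Pset_def by (auto simp: PiE_def Pi_def)

lemma idx: "j < (m::nat) \<Longrightarrow> s + j*L + L \<le> s + m*L"
proof -
  assume "j < m"
  then have "Suc j * L \<le> m * L" by (intro mult_le_mono1) simp
  then show ?thesis by simp
qed

lemma SP_depth: "(\<forall>c\<in>#fst (SP n m e s a b). ac_depth c \<le> e) \<and> (\<forall>c\<in>#snd (SP n m e s a b). ac_depth c \<le> e)"
proof (induction e arbitrary: s a b)
  case 0
  then show ?case by simp
next
  case (Suc e)
  have f: "ac_depth (AndG (\<Sum>j<m. snd (SP n m e (s + j*m^e) (ep m a b p j) (ep m a b p (Suc j))))) \<le> Suc e" for p
    by (rule depth_and) (use Suc.IH in \<open>auto simp: in_msum\<close>)
  have g: "ac_depth (OrG ((\<Sum>j<m-1. image_mset neg (snd (SP n m e (s + j*m^e) (ep m a b p j) (ep m a b p (Suc j)))))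
          + fst (SP n m e (s + (m-1)*m^e) (ep m a b p (m-1)) b))) \<le> Suc e" for p
    by (rule depth_or) (use Suc.IH in \<open>auto simp: in_msum neg_depth\<close>)
  show ?case using f g by (simp add: finite_Pset)
qed

lemma sum_img: "sum_mset (image_mset ac_size (image_mset F (mset_set A))) = (\<Sum>p\<in>A. ac_size (F p))"
  by (simp add: sum_unfold_sum_mset multiset.map_comp o_def)

lemma SP_size: assumes "1 \<le> m"
  shows "sum_mset (image_mset ac_size (fst (SP n m e s a b))) = m^e * n^(e*(m-1))
       \<and> sum_mset (image_mset ac_size (snd (SP n m e s a b))) = m^e * n^(e*(m-1))"
proof (induction e arbitrary: s a b)
  case 0
  then show ?case by simp
next
  case (Suc e)
  let ?S = "m^e * n^(e*(m-1))"
  have A: "ac_size (AndG (\<Sum>j<m. snd (SP n m e (s + j*m^e) (ep m a b p j) (ep m a b p (Suc j))))) = m * ?S" for p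
    using Suc.IH by (simp add: size_msum)
  have B: "ac_size (OrG ((\<Sum>j<m-1. image_mset neg (snd (SP n m e (s + j*m^e) (ep m a b p j) (ep m a b p (Suc j)))))
          + fst (SP n m e (s + (m-1)*m^e) (ep m a b p (m-1)) b))) = m * ?S" for p
  proof -
    have "ac_size (OrG ((\<Sum>j<m-1. image_mset neg (snd (SP n m e (s + j*m^e) (ep m a b p j) (ep m a b p (Suc j)))))
          + fst (SP n m e (s + (m-1)*m^e) (ep m a b p (m-1)) b))) = (m-1) * ?S + ?S"
      using Suc.IH by (simp add: size_msum multiset.map_comp o_def neg_size)
    also have "\<dots> = m * ?S" using assms by (cases m) auto
    finally show ?thesis .
  qed
  have e: "n ^ (m - 1) * (m * ?S) = m ^ Suc e * n ^ (Suc e * (m - 1))"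
    by (simp only: mult_Suc power_add power_Suc) (simp add: mult_ac)
  show ?case
    by (simp only: SP.simps fst_conv snd_conv sum_img A B sum_constant card_Pset of_nat_id e simp_thms)
qed

definition V :: "nat \<Rightarrow> nat \<Rightarrow> var set" where
  "V n t = {(i,a',b'). i < t \<and> a' < n \<and> b' < n}"

lemma V_mono: "t \<le> t' \<Longrightarrow> V n t \<subseteq> V n t'"
  unfolding V_def by auto

lemma SP_vars: assumes "1 \<le> m"
  shows "a < n \<Longrightarrow> b < n \<Longrightarrow> (\<forall>c\<in>#fst (SP n m e s a b). set_acf c \<subseteq> V n (s + m^e))
       \<and> (\<forall>c\<in>#snd (SP n m e s a b). set_acf c \<subseteq> V n (s + m^e))"
proof (induction e arbitrary: s a b)
  case 0
  then show ?case by (simp add: V_def)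
next
  case (Suc e)
  let ?L = "m^e"
  have ch: "set_acf d \<subseteq> V n (s + m^Suc e)"
    if "p \<in> Pset n m" "j < m" "d \<in># snd (SP n m e (s + j*?L) (ep m a b p j) (ep m a b p (Suc j)))
        \<or> d \<in># fst (SP n m e (s + j*?L) (ep m a b p j) (ep m a b p (Suc j)))" for p j d
  proof -
    have "ep m a b p j < n" "ep m a b p (Suc j) < n" using ep_lt that Suc.prems by auto
    then have "set_acf d \<subseteq> V n (s + j*?L + ?L)" using Suc.IH that by blast
    also have "\<dots> \<subseteq> V n (s + m^Suc e)" using idx[OF that(2), of s ?L] by (intro V_mono) simp
    finally show ?thesis .
  qed
  have chl: "set_acf d \<subseteq> V n (s + m^Suc e)"
    if "p \<in> Pset n m" "d \<in># fst (SP n m e (s + (m-1)*?L) (ep m a b p (m-1)) b)" for p d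
  proof -
    have "ep m a b p (Suc (m-1)) = b" using assms by (simp add: ep_def)
    then show ?thesis using ch[of p "m-1" d] that assms by simp
  qed
  have f: "set_acf (AndG (\<Sum>j<m. snd (SP n m e (s + j*m^e) (ep m a b p j) (ep m a b p (Suc j))))) \<subseteq> V n (s + m^Suc e)"
    if p: "p \<in> Pset n m" for p
  proof -
    have "\<forall>d\<in>#(\<Sum>j<m. snd (SP n m e (s + j*m^e) (ep m a b p j) (ep m a b p (Suc j)))). set_acf d \<subseteq> V n (s + m^Suc e)"
    proof
      fix d assume "d \<in># (\<Sum>j<m. snd (SP n m e (s + j*m^e) (ep m a b p j) (ep m a b p (Suc j))))"
      then obtain j where "j < m" "d \<in># snd (SP n m e (s + j*m^e) (ep m a b p j) (ep m a b p (Suc j)))"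
        by (auto simp: in_msum)
      then show "set_acf d \<subseteq> V n (s + m^Suc e)" using ch[OF p] by blast
    qed
    then show ?thesis by auto
  qed
  have g: "set_acf (OrG ((\<Sum>j<m-1. image_mset neg (snd (SP n m e (s + j*m^e) (ep m a b p j) (ep m a b p (Suc j)))))
          + fst (SP n m e (s + (m-1)*m^e) (ep m a b p (m-1)) b))) \<subseteq> V n (s + m^Suc e)"
    if p: "p \<in> Pset n m" for p
  proof -
    have "\<forall>d\<in>#(\<Sum>j<m-1. image_mset neg (snd (SP n m e (s + j*m^e) (ep m a b p j) (ep m a b p (Suc j))))). set_acf d \<subseteq> V n (s + m^Suc e)"
    proof
      fix d assume "d \<in># (\<Sum>j<m-1. image_mset neg (snd (SP n m e (s + j*m^e) (ep m a b p j) (ep m a b p (Suc j)))))"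
      then obtain j d' where "j < m-1" "d' \<in># snd (SP n m e (s + j*m^e) (ep m a b p j) (ep m a b p (Suc j)))" "d = neg d'"
        by (auto simp: in_msum)
      then show "set_acf d \<subseteq> V n (s + m^Suc e)" using ch[OF p, of j d'] by (simp add: neg_set)
    qed
    moreover have "\<forall>d\<in>#fst (SP n m e (s + (m-1)*m^e) (ep m a b p (m-1)) b). set_acf d \<subseteq> V n (s + m^Suc e)"
      using chl[OF p] by auto
    ultimately show ?thesis by auto
  qed
  show ?case using f g by (simp add: finite_Pset)
qed



lemma img_perm:
  assumes "finite A" "inj_on \<tau> A" "\<tau> ` A = A" "\<And>p. p \<in> A \<Longrightarrow> f (F p) = F' (\<tau> p)"
  shows "image_mset f (image_mset F (mset_set A)) = image_mset F' (mset_set A)"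
proof -
  have "image_mset f (image_mset F (mset_set A)) = image_mset (\<lambda>p. F' (\<tau> p)) (mset_set A)"
    unfolding multiset.map_comp o_def using assms(1,4) by (intro image_mset_cong) simp
  also have "\<dots> = image_mset F' (image_mset \<tau> (mset_set A))"
    by (simp add: multiset.map_comp o_def)
  also have "\<dots> = image_mset F' (mset_set A)"
    using assms(2,3) by (simp add: image_mset_mset_set)
  finally show ?thesis .
qed

definition FF :: "nat \<Rightarrow> nat \<Rightarrow> nat \<Rightarrow> nat \<Rightarrow> nat \<Rightarrow> nat \<Rightarrow> (nat \<Rightarrow> nat) \<Rightarrow> var acf" where
  "FF n m e s a b p = AndG (\<Sum>j<m. snd (SP n m e (s + j*m^e) (ep m a b p j) (ep m a b p (Suc j))))"
definition GG :: "nat \<Rightarrow> nat \<Rightarrow> nat \<Rightarrow> nat \<Rightarrow> nat \<Rightarrow> nat \<Rightarrow> (nat \<Rightarrow> nat) \<Rightarrow> var acf" where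
  "GG n m e s a b p = OrG ((\<Sum>j<m-1. image_mset neg (snd (SP n m e (s + j*m^e) (ep m a b p j) (ep m a b p (Suc j)))))
          + fst (SP n m e (s + (m-1)*m^e) (ep m a b p (m-1)) b))"

lemma SP_Suc: "SP n m (Suc e) s a b = (image_mset (FF n m e s a b) (mset_set (Pset n m)), image_mset (GG n m e s a b) (mset_set (Pset n m)))"
  by (simp add: FF_def[abs_def] GG_def[abs_def])

lemma SP_inv: assumes "1 \<le> m"
  shows "(\<forall>i \<le> s + m^e. g i permutes {..<n}) \<Longrightarrow> a < n \<Longrightarrow> b < n \<Longrightarrow>
   image_mset (map_acf (act_var g)) (fst (SP n m e s a b)) = fst (SP n m e s (g s a) (g (s+m^e) b))
 \<and> image_mset (map_acf (act_var g)) (snd (SP n m e s a b)) = snd (SP n m e s (g s a) (g (s+m^e) b))"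
proof (induction e arbitrary: s a b)
  case 0
  then show ?case by (simp add: act_var_def)
next
  case (Suc e)
  let ?L = "m^e"
  let ?h = "map_acf (act_var g)"
  let ?P = "Pset n m"
  define \<tau> where "\<tau> p = restrict (\<lambda>j. g (s + j*?L) (p j)) {1..<m}" for p
  have jL: "s + j*?L \<le> s + m^Suc e" if "j \<le> m" for j
    using that by (simp add: mult_le_mono1)
  have gp: "g (s + j*?L) permutes {..<n}" if "j \<le> m" for j
    using Suc.prems(1) jL[OF that] by blast
  have gl: "g (s + j*?L) y < n" if "j \<le> m" "y < n" for j y
    using permutes_in_image[OF gp[OF that(1)], of y] that(2) by simp
  have \<tau>P: "\<tau> p \<in> ?P" if "p \<in> ?P" for p
    using that unfolding Pset_def \<tau>_def
    by (auto simp: PiE_def Pi_def intro!: gl)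
  have \<tau>inj: "inj_on \<tau> ?P"
  proof
    fix p q assume pq: "p \<in> ?P" "q \<in> ?P" "\<tau> p = \<tau> q"
    show "p = q"
    proof (rule PiE_ext)
      show "p \<in> PiE {1..<m} (\<lambda>_. {..<n})" "q \<in> PiE {1..<m} (\<lambda>_. {..<n})" using pq by (auto simp: Pset_def)
      fix j assume j: "j \<in> {1..<m}"
      then have "g (s + j*?L) (p j) = g (s + j*?L) (q j)"
        using fun_cong[OF pq(3), of j] by (simp add: \<tau>_def)
      then show "p j = q j" using gp[of j] j permutes_inj[of "g (s + j*?L)"] by (auto dest: injD)
    qed
  qed
  have \<tau>img: "\<tau> ` ?P = ?P"
    using \<tau>P \<tau>inj by (intro endo_inj_surj) (auto simp: finite_Pset)
  have ep\<tau>: "ep m (g s a) (g (s + m^Suc e) b) (\<tau> p) j = g (s + j*?L) (ep m a b p j)" if "j \<le> m" for p j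
    using that assms by (auto simp: ep_def \<tau>_def)
  have IHj: "image_mset ?h (snd (SP n m e (s + j*?L) (ep m a b p j) (ep m a b p (Suc j))))
      = snd (SP n m e (s + j*?L) (ep m (g s a) (g (s + m^Suc e) b) (\<tau> p) j) (ep m (g s a) (g (s + m^Suc e) b) (\<tau> p) (Suc j)))"
    if "p \<in> ?P" "j < m" for p j
  proof -
    have e1: "s + Suc j * ?L = s + j*?L + ?L" by simp
    have "ep m a b p j < n" "ep m a b p (Suc j) < n" using ep_lt that Suc.prems by auto
    moreover have "\<forall>i \<le> s + j*?L + ?L. g i permutes {..<n}"
      using Suc.prems(1) idx[OF that(2), of s ?L] by auto
    ultimately show ?thesis using Suc.IH[of "s + j*?L"] ep\<tau>[of j p] ep\<tau>[of "Suc j" p] that e1 by (simp add: add_ac)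
  qed
  have IHl: "image_mset ?h (fst (SP n m e (s + (m-1)*?L) (ep m a b p (m-1)) b))
      = fst (SP n m e (s + (m-1)*?L) (ep m (g s a) (g (s + m^Suc e) b) (\<tau> p) (m-1)) (g (s + m^Suc e) b))"
    if "p \<in> ?P" for p
  proof -
    have e1: "s + (m-1)*?L + ?L = s + m^Suc e" using assms by (cases m) auto
    have e2: "(m - Suc 0)*?L + ?L = m*?L" using assms by (cases m) auto
    have "ep m a b p (m-1) < n" using ep_lt that Suc.prems by auto
    moreover have "\<forall>i \<le> s + (m-1)*?L + ?L. g i permutes {..<n}"
      using Suc.prems(1) e1 by auto
    ultimately show ?thesis using Suc.IH[of "s + (m-1)*?L" "ep m a b p (m-1)" b] ep\<tau>[of "m-1" p] Suc.prems by (simp add: add.assoc e2)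
  qed
  have A: "?h (FF n m e s a b p) = FF n m e s (g s a) (g (s + m^Suc e) b) (\<tau> p)" if "p \<in> ?P" for p
    unfolding FF_def using IHj[OF that] by (simp add: image_msum)
  have B: "?h (GG n m e s a b p) = GG n m e s (g s a) (g (s + m^Suc e) b) (\<tau> p)" if "p \<in> ?P" for p
  proof -
    have "image_mset ?h (image_mset neg M) = image_mset neg (image_mset ?h M)" for M
      by (simp add: multiset.map_comp o_def neg_map)
    then show ?thesis unfolding GG_def using IHj[OF that] IHl[OF that] by (simp add: image_msum)
  qed
  show ?case unfolding SP_Suc fst_conv snd_conv
    using img_perm[of "Pset n m" \<tau> ?h "FF n m e s a b" "FF n m e s (g s a) (g (s + m^Suc e) b)", OF finite_Pset \<tau>inj \<tau>img A]
      img_perm[of "Pset n m" \<tau> ?h "GG n m e s a b" "GG n m e s (g s a) (g (s + m^Suc e) b)", OF finite_Pset \<tau>inj \<tau>img B] by simp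
qed



lemma ball_msum: "finite A \<Longrightarrow> (\<forall>c\<in>#(\<Sum>j\<in>A. X j). P c) \<longleftrightarrow> (\<forall>j\<in>A. \<forall>c\<in>#X j. P c)"
  using in_msum[of A _ X] by blast
lemma bex_msum: "finite A \<Longrightarrow> (\<exists>c\<in>#(\<Sum>j\<in>A. X j). P c) \<longleftrightarrow> (\<exists>j\<in>A. \<exists>c\<in>#X j. P c)"
  using in_msum[of A _ X] by blast

lemma eval_or: "ac_eval (OrG M) x \<longleftrightarrow> (\<exists>c\<in>#M. ac_eval c x)" by simp

lemma chainA: "(\<forall>j<J. fw n x (s+j*L) L (ep m a b p j) = ep m a b p (Suc j)) \<Longrightarrow> j \<le> J
   \<Longrightarrow> ep m a b p j = fw n x s (j*L) a"
proof (induction j)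
  case 0
  then show ?case by (simp add: ep_def)
next
  case (Suc j)
  have "j < J" using Suc.prems(2) by simp
  then have "ep m a b p (Suc j) = fw n x (s+j*L) L (ep m a b p j)" using Suc.prems(1) by metis
  also have "\<dots> = fw n x (s+j*L) L (fw n x s (j*L) a)"
  proof -
    have "ep m a b p j = fw n x s (j*L) a" using Suc.IH Suc.prems by simp
    then show ?thesis by simp
  qed
  also have "\<dots> = fw n x s (j*L + L) a" by (simp add: fw_add)
  finally show ?case by (simp add: add.commute)
qed

lemma SP_sem: assumes m1: "1 \<le> m" and pt: "perm_tuple n k x"
  shows "s + m^e \<le> k \<Longrightarrow> a < n \<Longrightarrow> b < n \<Longrightarrow>
   ((\<exists>c\<in>#fst (SP n m e s a b). ac_eval c x) \<longleftrightarrow> fw n x s (m^e) a = b)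
 \<and> ((\<forall>c\<in>#snd (SP n m e s a b). ac_eval c x) \<longleftrightarrow> fw n x s (m^e) a = b)"
proof (induction e arbitrary: s a b)
  case 0
  then have "perm_mat_at n x s" using pt by (simp add: perm_tuple_def)
  then show ?case using sig_eq[of n x s a b] 0 by simp
next
  case (Suc e)
  let ?L = "m^e"
  let ?P = "Pset n m"
  let ?C = "\<lambda>p j. fw n x (s+j*?L) ?L (ep m a b p j) = ep m a b p (Suc j)"
  have mL: "m^Suc e = m * ?L" by simp
  have IHj: "((\<exists>c\<in>#fst (SP n m e (s + j*?L) (ep m a b p j) (ep m a b p (Suc j))). ac_eval c x) \<longleftrightarrow> ?C p j)
     \<and> ((\<forall>c\<in>#snd (SP n m e (s + j*?L) (ep m a b p j) (ep m a b p (Suc j))). ac_eval c x) \<longleftrightarrow> ?C p j)"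
    if "p \<in> ?P" "j < m" for p j
  proof -
    have "ep m a b p j < n" "ep m a b p (Suc j) < n" using ep_lt that Suc.prems by auto
    moreover have "s + j*?L + ?L \<le> k" using idx[OF that(2), of s ?L] Suc.prems(1) by simp
    ultimately show ?thesis using Suc.IH by blast
  qed
  have IHl: "(\<exists>c\<in>#fst (SP n m e (s + (m-1)*?L) (ep m a b p (m-1)) b). ac_eval c x) \<longleftrightarrow>
      fw n x (s+(m-1)*?L) ?L (ep m a b p (m-1)) = b"
    if "p \<in> ?P" for p
  proof -
    have "ep m a b p (m-1) < n" using ep_lt that Suc.prems by auto
    moreover have "s + (m-1)*?L + ?L \<le> k" using idx[of "m-1" m s ?L] m1 Suc.prems(1) by simp
    ultimately show ?thesis using Suc.IH Suc.prems by blast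
  qed
  have Fs: "ac_eval (FF n m e s a b p) x \<longleftrightarrow> (\<forall>j<m. ?C p j)" if "p \<in> ?P" for p
    using IHj[OF that] by (auto simp: FF_def ball_msum)
  have Gs: "ac_eval (GG n m e s a b p) x \<longleftrightarrow> (\<exists>j<m-1. \<not> ?C p j) \<or> fw n x (s+(m-1)*?L) ?L (ep m a b p (m-1)) = b"
    if "p \<in> ?P" for p
  proof -
    have "j < m-1 \<Longrightarrow> (\<exists>c\<in>#image_mset neg (snd (SP n m e (s + j*?L) (ep m a b p j) (ep m a b p (Suc j)))). ac_eval c x)
       \<longleftrightarrow> \<not> ?C p j" for j
      using IHj[OF that, of j] by (auto simp: neg_eval)
    then show ?thesis using IHl[OF that] unfolding GG_def eval_or set_mset_union bex_Un bex_msum[OF finite_lessThan]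
      by auto
  qed
  define p0 where "p0 = restrict (\<lambda>j. fw n x s (j*?L) a) {1..<m}"
  have jk: "s + j*?L \<le> k" if "j \<le> m" for j
  proof -
    have "j*?L \<le> m*?L" using mult_le_mono1[OF that] by blast
    moreover have "s + m*?L \<le> k" using Suc.prems(1) by simp
    ultimately show ?thesis by linarith
  qed
  have p0P: "p0 \<in> ?P"
    unfolding p0_def Pset_def using fw_lt[OF pt jk] Suc.prems by auto
  have p0e: "ep m a b p0 j = fw n x s (j*?L) a" if "j < m" for j
    using that by (auto simp: ep_def p0_def)
  have chain0: "?C p0 j" if "Suc j < m" for j
  proof -
    have "fw n x (s+j*?L) ?L (ep m a b p0 j) = fw n x s (j*?L + ?L) a"
      using p0e[of j] that by (simp add: fw_add)
    also have "\<dots> = ep m a b p0 (Suc j)" using p0e[OF that] by (simp add: add.commute)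
    finally show ?thesis .
  qed
  have lastm: "(m-1)*?L + ?L = m*?L" using m1 by (cases m) auto
  have sig_side: "(\<exists>p\<in>?P. \<forall>j<m. ?C p j) \<longleftrightarrow> fw n x s (m*?L) a = b"
  proof
    assume "\<exists>p\<in>?P. \<forall>j<m. ?C p j"
    then obtain p where "\<forall>j<m. ?C p j" by blast
    from chainA[OF this order_refl] have "ep m a b p m = fw n x s (m*?L) a" .
    then show "fw n x s (m*?L) a = b" using m1 by (simp add: ep_def)
  next
    assume h: "fw n x s (m*?L) a = b"
    have "?C p0 j" if "j < m" for j
    proof (cases "Suc j < m")
      case True
      then show ?thesis using chain0 by blast
    next
      case False
      then have jm: "Suc j = m" using that by simp
      have "fw n x (s+j*?L) ?L (ep m a b p0 j) = fw n x s (j*?L + ?L) a"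
        using p0e[OF that] by (simp add: fw_add)
      also have "j*?L + ?L = m*?L" using jm by auto
      finally show ?thesis using h jm by (simp add: ep_def)
    qed
    then show "\<exists>p\<in>?P. \<forall>j<m. ?C p j" using p0P by blast
  qed
  have pi_side: "(\<forall>p\<in>?P. (\<exists>j<m-1. \<not> ?C p j) \<or> fw n x (s+(m-1)*?L) ?L (ep m a b p (m-1)) = b)
      \<longleftrightarrow> fw n x s (m*?L) a = b"
  proof
    assume h: "\<forall>p\<in>?P. (\<exists>j<m-1. \<not> ?C p j) \<or> fw n x (s+(m-1)*?L) ?L (ep m a b p (m-1)) = b"
    have "\<not> (\<exists>j<m-1. \<not> ?C p0 j)" using chain0 by auto
    then have "fw n x (s+(m-1)*?L) ?L (ep m a b p0 (m-1)) = b" using h p0P by blast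
    then have "fw n x (s+(m-1)*?L) ?L (fw n x s ((m-1)*?L) a) = b" using p0e[of "m-1"] m1 by simp
    then show "fw n x s (m*?L) a = b" using lastm by (simp add: fw_add[symmetric])
  next
    assume h: "fw n x s (m*?L) a = b"
    show "\<forall>p\<in>?P. (\<exists>j<m-1. \<not> ?C p j) \<or> fw n x (s+(m-1)*?L) ?L (ep m a b p (m-1)) = b"
    proof (intro ballI)
      fix p assume "p \<in> ?P"
      show "(\<exists>j<m-1. \<not> ?C p j) \<or> fw n x (s+(m-1)*?L) ?L (ep m a b p (m-1)) = b"
      proof (cases "\<forall>j<m-1. ?C p j")
        case True
        from chainA[OF True order_refl] have "ep m a b p (m-1) = fw n x s ((m-1)*?L) a" .
        then have "fw n x (s+(m-1)*?L) ?L (ep m a b p (m-1)) = fw n x s ((m-1)*?L + ?L) a"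
          by (simp add: fw_add)
        then show ?thesis using h lastm by simp
      next
        case False
        then show ?thesis by blast
      qed
    qed
  qed
  show ?case unfolding SP_Suc fst_conv snd_conv mL
    using Fs Gs sig_side pi_side by (simp add: finite_Pset)
qed



theorem lemma3p1:
  fixes n k d m :: nat
  assumes "n \<ge> 1" and "k \<ge> 1" and "d \<ge> 1" and "m ^ d = k"
  shows "(\<exists>f. is_Sigma (d+1) f \<and> Sn_invariant n k f \<and> computes_word n k f
              \<and> ac_size f \<le> k * n ^ (d * (m - 1)))
       \<and> (\<exists>f. is_Pi (d+1) f \<and> Sn_invariant n k f \<and> computes_word n k f
              \<and> ac_size f \<le> k * n ^ (d * (m - 1)))"
proof -
  have m1: "1 \<le> m"
  proof (rule ccontr)
    assume "\<not> 1 \<le> m"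
    then have "m = 0" by simp
    then have "k = 0" using assms(3,4) by (simp add: zero_power)
    then show False using assms(2) by simp
  qed
  have n0: "0 < n" using assms by simp
  have kk: "0 + m^d = k" using assms by simp
  let ?M1 = "fst (SP n m d 0 0 0)"
  let ?M2 = "snd (SP n m d 0 0 0)"
  have vars: "(\<forall>c\<in>#?M1. set_acf c \<subseteq> V n k) \<and> (\<forall>c\<in>#?M2. set_acf c \<subseteq> V n k)"
    using SP_vars[OF m1 n0 n0, of d 0] kk by simp
  have sem: "((\<exists>c\<in>#?M1. ac_eval c x) \<longleftrightarrow> fw n x 0 k 0 = 0) \<and> ((\<forall>c\<in>#?M2. ac_eval c x) \<longleftrightarrow> fw n x 0 k 0 = 0)"
    if "perm_tuple n k x" for x
    using SP_sem[OF m1 that, of 0 d 0 0] kk n0 by simp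
  have word: "word_fn n k x = (if fw n x 0 k 0 = 0 then 1 else 0)" if "perm_tuple n k x" for x
    unfolding word_fn_def using prod_entry_fw[OF that order_refl n0 n0] .
  have inv: "image_mset (map_acf (act_var g)) ?M1 = ?M1 \<and> image_mset (map_acf (act_var g)) ?M2 = ?M2"
    if "valid_action n k g" for g
  proof -
    have H: "\<forall>i \<le> 0 + m^d. g i permutes {..<n}"
    proof (intro allI impI)
      fix i assume "i \<le> 0 + m^d"
      then have "i \<le> k" using kk by simp
      then show "g i permutes {..<n}"
        using that unfolding valid_action_def
        by (cases "i = 0"; cases "i = k") (auto simp: permutes_id)
    qed
    moreover have "g 0 0 = 0" "g (0 + m^d) 0 = 0" using that kk unfolding valid_action_def by auto
    moreover note SP_inv[OF m1 H n0 n0]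
    ultimately show ?thesis by simp
  qed
  have size: "sum_mset (image_mset ac_size ?M1) = k * n ^ (d * (m - 1))
       \<and> sum_mset (image_mset ac_size ?M2) = k * n ^ (d * (m - 1))"
    using SP_size[OF m1, of n d 0 0 0] assms(4) by simp
  have dep: "(\<forall>c\<in>#?M1. ac_depth c \<le> d) \<and> (\<forall>c\<in>#?M2. ac_depth c \<le> d)"
    using SP_depth by blast
  have Vk: "V n k = {(i,a,b). i < k \<and> a < n \<and> b < n}" by (simp add: V_def)
  have S: "is_Sigma (d+1) (OrG ?M1) \<and> Sn_invariant n k (OrG ?M1) \<and> computes_word n k (OrG ?M1)
              \<and> ac_size (OrG ?M1) \<le> k * n ^ (d * (m - 1))"
  proof (intro conjI)
    show "is_Sigma (d+1) (OrG ?M1)" unfolding is_Sigma_def using depth_or[of ?M1 d] dep by simp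
    show "Sn_invariant n k (OrG ?M1)" unfolding Sn_invariant_def using inv by simp
    show "computes_word n k (OrG ?M1)" unfolding computes_word_def
    proof (intro conjI allI impI)
      show "set_acf (OrG ?M1) \<subseteq> {(i,a,b). i < k \<and> a < n \<and> b < n}" using vars Vk by auto
      fix x assume "perm_tuple n k x"
      then show "(if ac_eval (OrG ?M1) x then 1 else 0) = word_fn n k x"
        using sem word by (simp only: eval_or)
    qed
    show "ac_size (OrG ?M1) \<le> k * n ^ (d * (m - 1))" using size by simp
  qed
  have P: "is_Pi (d+1) (AndG ?M2) \<and> Sn_invariant n k (AndG ?M2) \<and> computes_word n k (AndG ?M2)
              \<and> ac_size (AndG ?M2) \<le> k * n ^ (d * (m - 1))"
  proof (intro conjI)
    show "is_Pi (d+1) (AndG ?M2)" unfolding is_Pi_def using depth_and[of ?M2 d] dep by simp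
    show "Sn_invariant n k (AndG ?M2)" unfolding Sn_invariant_def using inv by simp
    show "computes_word n k (AndG ?M2)" unfolding computes_word_def
    proof (intro conjI allI impI)
      show "set_acf (AndG ?M2) \<subseteq> {(i,a,b). i < k \<and> a < n \<and> b < n}" using vars Vk by auto
      fix x assume "perm_tuple n k x"
      moreover have "ac_eval (AndG ?M2) x \<longleftrightarrow> (\<forall>c\<in>#?M2. ac_eval c x)" by simp
      ultimately show "(if ac_eval (AndG ?M2) x then 1 else 0) = word_fn n k x"
        using sem word by simp
    qed
    show "ac_size (AndG ?M2) \<le> k * n ^ (d * (m - 1))" using size by simp
  qed
  show ?thesis using S P by blast
qed


end
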